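(* Let $h^\star:\mathbb R\to[0,1]$ be non-decreasing. Let $A\subseteq B$ be finite multisets of real numbers, and let $k,\ell$ be integers with $k\le|A|$ and $k\le\ell\le|B|$. Let $A_k$ be the multiset of the $k$ largest elements of $A$ and $B_\ell$ the multiset of the $\ell$ largest elements of $B$. Then \[ 1-\prod_{r\in B_\ell}\big(1-h^\star(r)\big)\ge1-\prod_{r\in A_k}\big(1-h^\star(r)\big). \] *)

theory Defs
  imports Complex_Main "HOL-Library.Multiset"
begin

text \<open>The multiset of the k largest elements of a finite multiset A
  (for k \<le> size A); ties are irrelevant since equal values are interchangeable.\<close>
definition top_k :: "nat \<Rightarrow> real multiset \<Rightarrow> real multiset" where
  "top_k k A = mset (take k (rev (sorted_list_of_multiset A)))"

end

theory Submission
  imports Defs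
begin

lemma desc_nth_le:
  fixes A B :: "real multiset"
  assumes "A \<subseteq># B" "i < size A"
  shows "rev (sorted_list_of_multiset A) ! i \<le> rev (sorted_list_of_multiset B) ! i"
proof (rule ccontr)
  define xs where "xs = rev (sorted_list_of_multiset A)"
  define ys where "ys = rev (sorted_list_of_multiset B)"
  assume "\<not> ?thesis"
  hence lt: "ys ! i < xs ! i" by (simp add: xs_def ys_def)
  define t where "t = xs ! i"
  have lx: "length xs = size A" and ly: "length ys = size B" by (metis xs_def length_rev size_mset mset_sorted_list_of_multiset, metis ys_def length_rev size_mset mset_sorted_list_of_multiset)
  have sx: "sorted_wrt (\<ge>) xs" by (simp add: xs_def sorted_wrt_rev)
  have sy: "sorted_wrt (\<ge>) ys" by (simp add: ys_def sorted_wrt_rev)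
  have sAB: "size A \<le> size B" using assms(1) by (simp add: size_mset_mono)
  have iB: "i < length ys" using ly sAB assms(2) by simp
  have "\<forall>y\<in>set (take (Suc i) xs). t \<le> y"
  proof
    fix y assume "y \<in> set (take (Suc i) xs)"
    then obtain j where j: "j < length (take (Suc i) xs)" "y = take (Suc i) xs ! j"
      by (metis in_set_conv_nth)
    hence "j \<le> i" "y = xs ! j" "i < length xs" using lx assms(2) by auto
    thus "t \<le> y" unfolding t_def using sx
      by (metis le_eq_less_or_eq sorted_wrt_nth_less order_refl)
  qed
  hence "filter (\<lambda>y. t \<le> y) (take (Suc i) xs) = take (Suc i) xs" by simp
  hence "Suc i \<le> length (filter (\<lambda>y. t \<le> y) (take (Suc i) xs))"
    using lx assms(2) by simp
  also have "\<dots> \<le> length (filter (\<lambda>y. t \<le> y) xs)"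
    by (metis append_take_drop_id filter_append length_append le_add1)
  also have "\<dots> = size (filter_mset (\<lambda>y. t \<le> y) A)"
    by (metis mset_filter size_mset xs_def mset_rev mset_sorted_list_of_multiset)
  also have "\<dots> \<le> size (filter_mset (\<lambda>y. t \<le> y) B)"
    by (intro size_mset_mono multiset_filter_mono assms(1))
  also have "\<dots> = length (filter (\<lambda>y. t \<le> y) ys)"
    by (metis mset_filter size_mset ys_def mset_rev mset_sorted_list_of_multiset)
  also have "filter (\<lambda>y. t \<le> y) (drop i ys) = []"
  proof -
    have "\<forall>y\<in>set (drop i ys). y < t"
    proof
      fix y assume "y \<in> set (drop i ys)"
      then obtain j where j: "j < length (drop i ys)" "y = drop i ys ! j"
        by (metis in_set_conv_nth)
      hence "y = ys ! (i + j)" "i + j < length ys" by auto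
      hence "y \<le> ys ! i" using sy
        by (metis le_add1 le_eq_less_or_eq sorted_wrt_nth_less order_refl)
      thus "y < t" using lt t_def by simp
    qed
    thus ?thesis by (simp add: filter_empty_conv) (meson not_le)
  qed
  hence "length (filter (\<lambda>y. t \<le> y) ys) = length (filter (\<lambda>y. t \<le> y) (take i ys))"
    by (metis append_take_drop_id filter_append append_Nil2)
  also have "\<dots> \<le> i" using iB
    by (metis length_filter_le length_take min.absorb2 less_imp_le)
  finally show False by simp
qed

theorem lemma5:
  fixes h :: "real \<Rightarrow> real" and A B :: "real multiset" and k l :: nat
  assumes "mono h"
    and "\<And>x. 0 \<le> h x \<and> h x \<le> 1"
    and "A \<subseteq># B"
    and "k \<le> size A" and "k \<le> l" and "l \<le> size B"
  shows "1 - (\<Prod>r\<in>#top_k l B. 1 - h r) \<ge> 1 - (\<Prod>r\<in>#top_k k A. 1 - h r)"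
proof -
  define xs where "xs = rev (sorted_list_of_multiset A)"
  define ys where "ys = rev (sorted_list_of_multiset B)"
  define g where "g = (\<lambda>r. 1 - h r)"
  have lx: "length xs = size A" and ly: "length ys = size B" by (metis xs_def length_rev size_mset mset_sorted_list_of_multiset, metis ys_def length_rev size_mset mset_sorted_list_of_multiset)
  have g01: "0 \<le> g x" "g x \<le> 1" for x using assms(2)[of x] by (auto simp: g_def)
  have P: "(\<Prod>r\<in>#mset (take n zs). g r) = (\<Prod>i<n. g (zs ! i))" if "n \<le> length zs" for n zs
    using that
  proof (induction n)
    case 0 then show ?case by simp
  next
    case (Suc n)
    have "take (Suc n) zs = take n zs @ [zs ! n]" using Suc.prems by (simp add: take_Suc_conv_app_nth)
    then show ?case using Suc by simp
  qed
  have PB: "(\<Prod>r\<in>#top_k l B. g r) = (\<Prod>i<l. g (ys ! i))"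
    unfolding top_k_def ys_def[symmetric] using P assms(6) ly by simp
  have PA: "(\<Prod>r\<in>#top_k k A. g r) = (\<Prod>i<k. g (xs ! i))"
    unfolding top_k_def xs_def[symmetric] using P assms(4) lx by simp
  have "(\<Prod>i<l. g (ys ! i)) = (\<Prod>i<k. g (ys ! i)) * (\<Prod>i\<in>{k..<l}. g (ys ! i))"
    using assms(5) by (metis prod.atLeastLessThan_concat lessThan_atLeast0 zero_le)
  also have "\<dots> \<le> (\<Prod>i<k. g (ys ! i)) * 1"
    by (intro mult_left_mono prod_le_1 prod_nonneg g01 conjI)
  also have "\<dots> \<le> (\<Prod>i<k. g (xs ! i))"
  proof -
    have "g (ys ! i) \<le> g (xs ! i)" if "i < k" for i
    proof -
      have "xs ! i \<le> ys ! i" unfolding xs_def ys_def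
        using desc_nth_le assms(3,4) that by simp
      hence "h (xs ! i) \<le> h (ys ! i)" using assms(1) by (simp add: monoD)
      thus ?thesis by (simp add: g_def)
    qed
    thus ?thesis by (simp, intro prod_mono conjI g01) simp
  qed
  finally show ?thesis using PA PB by (simp add: g_def)
qed

end
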